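(* Let $\varphi\colon G\to G$ and $\psi\colon H\to H$ be endomorphisms of abelian groups and suppose $\psi$ is a factor of $\varphi$. Then: (1) if $G$ is torsion and $\varphi$ is positively expansive, then $\psi$ is positively expansive; (2) if $G$ is torsion, $\varphi$ and $\psi$ are automorphisms and $\varphi$ is expansive, then $\psi$ is expansive; (3) if $\varphi$ and $\psi$ are conjugate, then $\varphi$ is positively expansive if and only if $\psi$ is, and, when they are automorphisms, $\varphi$ is expansive if and only if $\psi$ is.
   Context: $\mathbb N=\{0,1,2,\dots\}$. An endomorphism $\varphi$ of an abelian group $G$ is positively expansive if there is a finite subgroup $S\leq G$ such that for every finite subgroup $F\leq G$ there is $n\in\mathbb N$ with $F\subseteq\sum_{k=0}^n\varphi^kS$. An automorphism $\varphi$ is expansive if there is a finite subgroup $S\leq G$ such that for every finite subgroup $F\leq G$ there is $n\in\mathbb N$ with $F\subseteq\sum_{|k|\leq n}\varphi^kS$. $\psi$ is a factor of $\varphi$ if there is a surjective homomorphism $\pi\colon G\to H$ with $\pi\circ\varphi=\psi\circ\pi$; they are conjugate if such a $\pi$ can be chosen to be an isomorphism. *)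

theory Defs
  imports Main
begin

text \<open>Abelian groups are modelled as types of class ab_group_add (the whole type is the group).\<close>

definition grp_hom :: "('a::ab_group_add \<Rightarrow> 'b::ab_group_add) \<Rightarrow> bool" where
  "grp_hom f \<longleftrightarrow> (\<forall>x y. f (x + y) = f x + f y)"

definition endomorphism :: "('a::ab_group_add \<Rightarrow> 'a) \<Rightarrow> bool" where
  "endomorphism f \<longleftrightarrow> grp_hom f"

definition automorphism :: "('a::ab_group_add \<Rightarrow> 'a) \<Rightarrow> bool" where
  "automorphism f \<longleftrightarrow> grp_hom f \<and> bij f"

definition subgrp :: "'a::ab_group_add set \<Rightarrow> bool" where
  "subgrp S \<longleftrightarrow> 0 \<in> S \<and> (\<forall>x\<in>S. \<forall>y\<in>S. x + y \<in> S) \<and> (\<forall>x\<in>S. - x \<in> S)"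

definition torsion_elem :: "'a::ab_group_add \<Rightarrow> bool" where
  "torsion_elem x \<longleftrightarrow> (\<exists>n::nat. n > 0 \<and> (\<Sum>i<n. x) = 0)"

definition subgrp_sum :: "('i \<Rightarrow> 'a::ab_group_add set) \<Rightarrow> 'i set \<Rightarrow> 'a set" where
  "subgrp_sum A K = {\<Sum>k\<in>K. g k | g. \<forall>k\<in>K. g k \<in> A k}"

text \<open>Integer powers of a map (negative powers use the inverse; meaningful for automorphisms).\<close>
definition zpow :: "('a \<Rightarrow> 'a) \<Rightarrow> int \<Rightarrow> 'a \<Rightarrow> 'a" where
  "zpow f k = (if k \<ge> 0 then f ^^ nat k else (inv f) ^^ nat (- k))"

definition pos_expansive :: "('a::ab_group_add \<Rightarrow> 'a) \<Rightarrow> bool" where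
  "pos_expansive f \<longleftrightarrow> (\<exists>S. finite S \<and> subgrp S \<and>
     (\<forall>F. finite F \<and> subgrp F \<longrightarrow> (\<exists>n::nat. F \<subseteq> subgrp_sum (\<lambda>k. (f ^^ k) ` S) {0..n})))"

definition expansive :: "('a::ab_group_add \<Rightarrow> 'a) \<Rightarrow> bool" where
  "expansive f \<longleftrightarrow> (\<exists>S. finite S \<and> subgrp S \<and>
     (\<forall>F. finite F \<and> subgrp F \<longrightarrow> (\<exists>n::nat. F \<subseteq> subgrp_sum (\<lambda>k. zpow f k ` S) {- int n..int n})))"

definition is_factor :: "('a::ab_group_add \<Rightarrow> 'a) \<Rightarrow> ('b::ab_group_add \<Rightarrow> 'b) \<Rightarrow> bool" where
  "is_factor \<phi> \<psi> \<longleftrightarrow> (\<exists>\<pi>. grp_hom \<pi> \<and> surj \<pi> \<and> \<pi> \<circ> \<phi> = \<psi> \<circ> \<pi>)"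

definition conjugate :: "('a::ab_group_add \<Rightarrow> 'a) \<Rightarrow> ('b::ab_group_add \<Rightarrow> 'b) \<Rightarrow> bool" where
  "conjugate \<phi> \<psi> \<longleftrightarrow> (\<exists>\<pi>. grp_hom \<pi> \<and> bij \<pi> \<and> \<pi> \<circ> \<phi> = \<psi> \<circ> \<pi>)"

end

theory Submission
  imports Defs "HOL-Library.FuncSet"
begin

lemma hom_0: "grp_hom f \<Longrightarrow> f 0 = 0"
  unfolding grp_hom_def by (metis add.right_neutral add_left_cancel)

lemma hom_neg: "grp_hom f \<Longrightarrow> f (- x) = - f x"
proof -
  assume h: "grp_hom f"
  have "f (- x) + f x = 0" using h hom_0[OF h] unfolding grp_hom_def by (metis add.left_inverse)
  thus ?thesis by (simp add: eq_neg_iff_add_eq_0)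
qed

lemma hom_sum: "grp_hom f \<Longrightarrow> f (sum g K) = (\<Sum>k\<in>K. f (g k))"
proof (induction K rule: infinite_finite_induct)
  case (infinite A) then show ?case by (simp add: hom_0)
next
  case empty then show ?case by (simp add: hom_0)
next
  case (insert x F) then show ?case by (simp add: grp_hom_def)
qed

lemma image_subgrp_sum:
  assumes "grp_hom f" "\<forall>k\<in>K. f ` A k \<subseteq> B k"
  shows "f ` subgrp_sum A K \<subseteq> subgrp_sum B K"
proof
  fix z assume "z \<in> f ` subgrp_sum A K"
  then obtain g where g: "\<forall>k\<in>K. g k \<in> A k" "z = f (\<Sum>k\<in>K. g k)"
    unfolding subgrp_sum_def by auto
  have "z = (\<Sum>k\<in>K. f (g k))" using g hom_sum[OF assms(1)] by simp
  moreover have "\<forall>k\<in>K. f (g k) \<in> B k" using g assms(2) by blast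
  ultimately show "z \<in> subgrp_sum B K" unfolding subgrp_sum_def by blast
qed

lemma funpow_comm: "\<pi> \<circ> f = g \<circ> \<pi> \<Longrightarrow> \<pi> ((f ^^ k) x) = (g ^^ k) (\<pi> x)"
proof (induction k arbitrary: x)
  case 0 then show ?case by simp
next
  case (Suc k) then show ?case by (simp add: fun_eq_iff)
qed

lemma inv_comm:
  assumes "bij f" "bij g" "\<pi> \<circ> f = g \<circ> \<pi>"
  shows "\<pi> \<circ> inv f = inv g \<circ> \<pi>"
proof
  fix x
  have "g (\<pi> (inv f x)) = \<pi> x" using assms
    by (metis bij_is_surj comp_apply surj_f_inv_f)
  hence "inv g (g (\<pi> (inv f x))) = inv g (\<pi> x)" by simp
  thus "(\<pi> \<circ> inv f) x = (inv g \<circ> \<pi>) x" using assms(2) by (simp add: bij_is_inj)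
qed

lemma zpow_comm:
  assumes "bij f" "bij g" "\<pi> \<circ> f = g \<circ> \<pi>"
  shows "\<pi> (zpow f k x) = zpow g k (\<pi> x)"
  using funpow_comm[OF assms(3)] funpow_comm[OF inv_comm[OF assms]]
  unfolding zpow_def by simp

lemma image_subgrp:
  assumes "grp_hom f" "subgrp S" shows "subgrp (f ` S)"
  unfolding subgrp_def
proof (intro conjI ballI)
  show "0 \<in> f ` S" using assms by (metis hom_0 image_eqI subgrp_def)
next
  fix x y assume "x \<in> f ` S" "y \<in> f ` S"
  then obtain a b where "a \<in> S" "b \<in> S" "x = f a" "y = f b" by blast
  then have "x + y = f (a + b)" using assms(1) unfolding grp_hom_def by simp
  moreover have "a + b \<in> S" using assms(2) \<open>a \<in> S\<close> \<open>b \<in> S\<close> unfolding subgrp_def by blast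
  ultimately show "x + y \<in> f ` S" by blast
next
  fix x assume "x \<in> f ` S"
  then obtain a where "a \<in> S" "x = f a" by blast
  then have "- x = f (- a)" using hom_neg[OF assms(1)] by simp
  moreover have "- a \<in> S" using assms(2) \<open>a \<in> S\<close> unfolding subgrp_def by blast
  ultimately show "- x \<in> f ` S" by blast
qed

definition lift_prop :: "('a::ab_group_add \<Rightarrow> 'b::ab_group_add) \<Rightarrow> bool" where
  "lift_prop \<pi> \<longleftrightarrow> (\<forall>F'. finite F' \<and> subgrp F' \<longrightarrow> (\<exists>F. finite F \<and> subgrp F \<and> F' \<subseteq> \<pi> ` F))"

lemma transfer_pos:
  fixes \<pi> :: "'a::ab_group_add \<Rightarrow> 'b::ab_group_add"
  assumes "grp_hom \<pi>" "\<pi> \<circ> \<phi> = \<psi> \<circ> \<pi>" "lift_prop \<pi>" "pos_expansive \<phi>"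
  shows "pos_expansive \<psi>"
proof -
  obtain S where S: "finite S" "subgrp S"
    "\<forall>F. finite F \<and> subgrp F \<longrightarrow> (\<exists>n::nat. F \<subseteq> subgrp_sum (\<lambda>k. (\<phi> ^^ k) ` S) {0..n})"
    using assms(4) unfolding pos_expansive_def by blast
  show ?thesis unfolding pos_expansive_def
  proof (rule exI, intro conjI allI impI)
    show "finite (\<pi> ` S)" using S by simp
    show "subgrp (\<pi> ` S)" using S assms image_subgrp by blast
    fix F' :: "'b set" assume F': "finite F' \<and> subgrp F'"
    then obtain F where F: "finite F" "subgrp F" "F' \<subseteq> \<pi> ` F"
      using assms(3) unfolding lift_prop_def by blast
    then obtain n where n: "F \<subseteq> subgrp_sum (\<lambda>k. (\<phi> ^^ k) ` S) {0..n}" using S by blast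
    have "\<pi> ` subgrp_sum (\<lambda>k. (\<phi> ^^ k) ` S) {0..n} \<subseteq> subgrp_sum (\<lambda>k. (\<psi> ^^ k) ` \<pi> ` S) {0..n}"
      using image_subgrp_sum[OF assms(1), where K="{0..n}" and A="\<lambda>k. (\<phi> ^^ k) ` S" and B="\<lambda>k. (\<psi> ^^ k) ` \<pi> ` S"]
        funpow_comm[OF assms(2)] by (auto simp: image_iff)
    then show "\<exists>n::nat. F' \<subseteq> subgrp_sum (\<lambda>k. (\<psi> ^^ k) ` \<pi> ` S) {0..n}"
      using F n by blast
  qed
qed

lemma transfer_exp:
  fixes \<pi> :: "'a::ab_group_add \<Rightarrow> 'b::ab_group_add"
  assumes "grp_hom \<pi>" "\<pi> \<circ> \<phi> = \<psi> \<circ> \<pi>" "lift_prop \<pi>" "expansive \<phi>" "bij \<phi>" "bij \<psi>"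
  shows "expansive \<psi>"
proof -
  obtain S where S: "finite S" "subgrp S"
    "\<forall>F. finite F \<and> subgrp F \<longrightarrow> (\<exists>n::nat. F \<subseteq> subgrp_sum (\<lambda>k. zpow \<phi> k ` S) {- int n..int n})"
    using assms(4) unfolding expansive_def by blast
  show ?thesis unfolding expansive_def
  proof (rule exI, intro conjI allI impI)
    show "finite (\<pi> ` S)" using S by simp
    show "subgrp (\<pi> ` S)" using S assms image_subgrp by blast
    fix F' :: "'b set" assume F': "finite F' \<and> subgrp F'"
    then obtain F where F: "finite F" "subgrp F" "F' \<subseteq> \<pi> ` F"
      using assms(3) unfolding lift_prop_def by blast
    then obtain n where n: "F \<subseteq> subgrp_sum (\<lambda>k. zpow \<phi> k ` S) {- int n..int n}" using S by blast
    have "\<pi> ` subgrp_sum (\<lambda>k. zpow \<phi> k ` S) {- int n..int n} \<subseteq> subgrp_sum (\<lambda>k. zpow \<psi> k ` \<pi> ` S) {- int n..int n}"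
      using image_subgrp_sum[OF assms(1), where K="{- int n..int n}" and A="\<lambda>k. zpow \<phi> k ` S" and B="\<lambda>k. zpow \<psi> k ` \<pi> ` S"]
        zpow_comm[OF assms(5,6,2)] by (auto simp: image_iff)
    then show "\<exists>n::nat. F' \<subseteq> subgrp_sum (\<lambda>k. zpow \<psi> k ` \<pi> ` S) {- int n..int n}"
      using F n by blast
  qed
qed

lemma lift_bij:
  assumes "grp_hom \<pi>" "bij \<pi>" shows "lift_prop \<pi>"
  unfolding lift_prop_def
proof (intro allI impI)
  fix F' :: "'b set" assume F': "finite F' \<and> subgrp F'"
  have "finite (\<pi> -` F')" using F' assms(2) by (simp add: bij_is_inj finite_vimageI)
  moreover have "subgrp (\<pi> -` F')" using F' assms(1)
    unfolding subgrp_def by (auto simp: hom_0 hom_neg grp_hom_def)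
  moreover have "F' \<subseteq> \<pi> ` (\<pi> -` F')" using assms(2) by (simp add: bij_is_surj surj_image_vimage_eq)
  ultimately show "\<exists>F. finite F \<and> subgrp F \<and> F' \<subseteq> \<pi> ` F" by blast
qed

lemma conj_sym:
  assumes "conjugate \<phi> \<psi>" shows "conjugate \<psi> \<phi>"
proof -
  obtain \<pi> where p: "grp_hom \<pi>" "bij \<pi>" "\<pi> \<circ> \<phi> = \<psi> \<circ> \<pi>" using assms unfolding conjugate_def by blast
  have h: "grp_hom (inv \<pi>)" unfolding grp_hom_def
  proof (intro allI)
    fix x y
    have "\<pi> (inv \<pi> x + inv \<pi> y) = x + y" using p unfolding grp_hom_def
      by (simp add: bij_is_surj surj_f_inv_f)
    thus "inv \<pi> (x + y) = inv \<pi> x + inv \<pi> y" using p(2) by (metis bij_inv_eq_iff)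
  qed
  have c: "inv \<pi> \<circ> \<psi> = \<phi> \<circ> inv \<pi>"
  proof
    fix y
    have "\<psi> y = \<pi> (\<phi> (inv \<pi> y))" using p by (metis bij_inv_eq_iff comp_apply)
    thus "(inv \<pi> \<circ> \<psi>) y = (\<phi> \<circ> inv \<pi>) y" using p(2) by (simp add: bij_is_inj)
  qed
  show ?thesis unfolding conjugate_def using h c bij_imp_bij_inv[OF p(2)] by blast
qed


fun nm :: "nat \<Rightarrow> 'a::ab_group_add \<Rightarrow> 'a" where
  "nm 0 x = 0"
| "nm (Suc n) x = x + nm n x"

lemma nm_sum: "(\<Sum>i<n. x) = nm n x"
  by (induction n) (simp_all add: add.commute)

lemma nm_add: "nm (a + b) x = nm a x + nm b x"
  by (induction a) (simp_all add: add.assoc)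

lemma nm_mult: "nm N x = 0 \<Longrightarrow> nm (N * q) x = 0"
  by (induction q) (simp_all add: nm_add)

lemma nm_mod: assumes "nm N x = 0" shows "nm m x = nm (m mod N) x"
proof -
  have "nm m x = nm (N * (m div N) + m mod N) x" by simp
  also have "\<dots> = nm (m mod N) x" unfolding nm_add nm_mult[OF assms] by simp
  finally show ?thesis .
qed

lemma torsion_sub:
  assumes "torsion_elem x"
  shows "finite (range (\<lambda>m. nm m x)) \<and> subgrp (range (\<lambda>m. nm m x))"
proof -
  obtain N :: nat where N0: "N > 0" "(\<Sum>i<N. x) = 0" using assms unfolding torsion_elem_def by blast
  then have N: "N > 0" "nm N x = 0" by (simp_all add: nm_sum)
  have "range (\<lambda>m. nm m x) = (\<lambda>m. nm m x) ` {..<N}"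
  proof
    show "range (\<lambda>m. nm m x) \<subseteq> (\<lambda>m. nm m x) ` {..<N}"
    proof
      fix z assume "z \<in> range (\<lambda>m. nm m x)"
      then obtain m where "z = nm m x" by blast
      then have "z = nm (m mod N) x" using nm_mod[OF N(2)] by simp
      then show "z \<in> (\<lambda>m. nm m x) ` {..<N}" using N(1) by auto
    qed
  qed auto
  then have "finite (range (\<lambda>m. nm m x))" by simp
  moreover have "subgrp (range (\<lambda>m. nm m x))" unfolding subgrp_def
  proof (intro conjI ballI)
    show "0 \<in> range (\<lambda>m. nm m x)" by (rule range_eqI[where x=0]) simp
  next
    fix a b assume "a \<in> range (\<lambda>m. nm m x)" "b \<in> range (\<lambda>m. nm m x)"
    then obtain i j where "a = nm i x" "b = nm j x" by blast
    then have "a + b = nm (i + j) x" by (simp add: nm_add)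
    then show "a + b \<in> range (\<lambda>m. nm m x)" by (rule range_eqI)
  next
    fix a assume "a \<in> range (\<lambda>m. nm m x)"
    then obtain m where m: "a = nm m x" by blast
    have eq: "m + (N - 1) * m = N * m" using N(1) by (cases N) auto
    have "nm m x + nm ((N - 1) * m) x = nm (N * m) x"
      unfolding nm_add[symmetric] eq ..
    then have "nm m x + nm ((N - 1) * m) x = 0" using nm_mult[OF N(2)] by simp
    then have "- a = nm ((N - 1) * m) x" unfolding m by (rule minus_unique)
    then show "- a \<in> range (\<lambda>m. nm m x)" by (rule range_eqI)
  qed
  ultimately show ?thesis by (rule conjI)
qed

lemma subgrp_sum_subgrp:
  assumes "\<forall>k\<in>K. subgrp (A k)" shows "subgrp (subgrp_sum A K)"
  unfolding subgrp_def
proof (intro conjI ballI)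
  show "0 \<in> subgrp_sum A K" unfolding subgrp_sum_def
    by (intro CollectI exI[of _ "\<lambda>_. 0"] conjI) (use assms in \<open>auto simp: subgrp_def\<close>)
next
  fix x y assume "x \<in> subgrp_sum A K" "y \<in> subgrp_sum A K"
  then obtain g h where g: "\<forall>k\<in>K. g k \<in> A k" "x = sum g K" and h: "\<forall>k\<in>K. h k \<in> A k" "y = sum h K"
    unfolding subgrp_sum_def by blast
  have s1: "x + y = (\<Sum>k\<in>K. g k + h k)" using g h by (simp add: sum.distrib)
  have s2: "\<forall>k\<in>K. g k + h k \<in> A k" using g h assms unfolding subgrp_def by blast
  show "x + y \<in> subgrp_sum A K" unfolding subgrp_sum_def
    by (intro CollectI exI[of _ "\<lambda>k. g k + h k"] conjI s1 s2)
next
  fix x assume "x \<in> subgrp_sum A K"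
  then obtain g where g: "\<forall>k\<in>K. g k \<in> A k" "x = sum g K"
    unfolding subgrp_sum_def by blast
  have s1: "- x = (\<Sum>k\<in>K. - g k)" using g by (simp add: sum_negf)
  have s2: "\<forall>k\<in>K. - g k \<in> A k" using g assms unfolding subgrp_def by blast
  show "- x \<in> subgrp_sum A K" unfolding subgrp_sum_def
    by (intro CollectI exI[of _ "\<lambda>k. - g k"] conjI s1 s2)
qed

lemma subgrp_sum_finite:
  assumes "finite K" "\<forall>k\<in>K. finite (A k)" shows "finite (subgrp_sum A K)"
proof -
  have "subgrp_sum A K \<subseteq> (\<lambda>g. \<Sum>k\<in>K. g k) ` PiE K A"
  proof
    fix z assume "z \<in> subgrp_sum A K"
    then obtain g where g: "\<forall>k\<in>K. g k \<in> A k" "z = sum g K"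
      unfolding subgrp_sum_def by blast
    have "restrict g K \<in> PiE K A" using g by (simp add: restrict_PiE_iff)
    moreover have "z = (\<Sum>k\<in>K. restrict g K k)" using g by simp
    ultimately show "z \<in> (\<lambda>g. \<Sum>k\<in>K. g k) ` PiE K A" by blast
  qed
  moreover have "finite (PiE K A)" using assms by (simp add: finite_PiE)
  ultimately show ?thesis using finite_subset finite_imageI by blast
qed

lemma subgrp_sum_mem:
  assumes "finite K" "\<forall>k\<in>K. 0 \<in> A k" "y \<in> K" "a \<in> A y"
  shows "a \<in> subgrp_sum A K"
proof -
  let ?g = "\<lambda>k. if k = y then a else 0"
  have s1: "a = (\<Sum>k\<in>K. ?g k)" using assms by simp
  have s2: "\<forall>k\<in>K. ?g k \<in> A k" using assms by auto
  show ?thesis unfolding subgrp_sum_def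
    by (intro CollectI exI[of _ ?g] conjI s1 s2)
qed

lemma lift_torsion:
  fixes \<pi> :: "'a::ab_group_add \<Rightarrow> 'b::ab_group_add"
  assumes "\<forall>x::'a. torsion_elem x" "surj \<pi>"
  shows "lift_prop \<pi>"
  unfolding lift_prop_def
proof (intro allI impI)
  fix F' :: "'b set" assume F': "finite F' \<and> subgrp F'"
  define xs where "xs y = (SOME x. \<pi> x = y)" for y
  have xs: "\<pi> (xs y) = y" for y
  proof -
    obtain x0 where "y = \<pi> x0" using surjD[OF assms(2)] by blast
    then have "\<pi> x0 = y" by simp
    then show ?thesis unfolding xs_def by (rule someI)
  qed
  define T where "T y = range (\<lambda>m. nm m (xs y))" for y
  have T: "finite (T y) \<and> subgrp (T y)" for y unfolding T_def using torsion_sub[of "xs y"] assms(1) by simp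
  define F where "F = subgrp_sum T F'"
  have "finite F" unfolding F_def
    by (rule subgrp_sum_finite) (use F' T in auto)
  moreover have "subgrp F" unfolding F_def
    by (rule subgrp_sum_subgrp) (use T in auto)
  moreover have "F' \<subseteq> \<pi> ` F"
  proof
    fix y assume y: "y \<in> F'"
    have "nm 1 (xs y) = xs y" by simp
    then have "xs y \<in> T y" unfolding T_def by (metis rangeI)
    moreover have "\<forall>k\<in>F'. 0 \<in> T k" using T unfolding subgrp_def by auto
    ultimately have "xs y \<in> F" unfolding F_def using F' y by (intro subgrp_sum_mem) auto
    then show "y \<in> \<pi> ` F" using xs[of y] by (intro image_eqI[where x="xs y"]) simp_all
  qed
  ultimately show "\<exists>F. finite F \<and> subgrp F \<and> F' \<subseteq> \<pi> ` F" by (intro exI[of _ F]) simp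
qed

theorem proposition2p5:
  fixes \<phi> :: "'a::ab_group_add \<Rightarrow> 'a" and \<psi> :: "'b::ab_group_add \<Rightarrow> 'b"
  assumes "endomorphism \<phi>" and "endomorphism \<psi>" and "is_factor \<phi> \<psi>"
  shows "((\<forall>x::'a. torsion_elem x) \<and> pos_expansive \<phi> \<longrightarrow> pos_expansive \<psi>)
       \<and> ((\<forall>x::'a. torsion_elem x) \<and> automorphism \<phi> \<and> automorphism \<psi> \<and> expansive \<phi>
            \<longrightarrow> expansive \<psi>)
       \<and> (conjugate \<phi> \<psi> \<longrightarrow>
            (pos_expansive \<phi> \<longleftrightarrow> pos_expansive \<psi>)
            \<and> (automorphism \<phi> \<and> automorphism \<psi> \<longrightarrow> (expansive \<phi> \<longleftrightarrow> expansive \<psi>)))"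
proof -
  obtain \<pi> where p: "grp_hom \<pi>" "surj \<pi>" "\<pi> \<circ> \<phi> = \<psi> \<circ> \<pi>" using assms(3) unfolding is_factor_def by blast
  have A: "(\<forall>x::'a. torsion_elem x) \<and> pos_expansive \<phi> \<longrightarrow> pos_expansive \<psi>"
  proof
    assume h: "(\<forall>x::'a. torsion_elem x) \<and> pos_expansive \<phi>"
    have l: "lift_prop \<pi>" using h by (intro lift_torsion[OF _ p(2)]) simp
    show "pos_expansive \<psi>" by (rule transfer_pos[OF p(1,3) l]) (use h in simp)
  qed
  have B: "(\<forall>x::'a. torsion_elem x) \<and> automorphism \<phi> \<and> automorphism \<psi> \<and> expansive \<phi>
            \<longrightarrow> expansive \<psi>"
  proof
    assume h: "(\<forall>x::'a. torsion_elem x) \<and> automorphism \<phi> \<and> automorphism \<psi> \<and> expansive \<phi>"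
    have l: "lift_prop \<pi>" using h by (intro lift_torsion[OF _ p(2)]) simp
    show "expansive \<psi>" by (rule transfer_exp[OF p(1,3) l]) (use h in \<open>simp_all add: automorphism_def\<close>)
  qed
  have C: "conjugate \<phi> \<psi> \<longrightarrow>
            (pos_expansive \<phi> \<longleftrightarrow> pos_expansive \<psi>)
            \<and> (automorphism \<phi> \<and> automorphism \<psi> \<longrightarrow> (expansive \<phi> \<longleftrightarrow> expansive \<psi>))"
  proof
    assume c: "conjugate \<phi> \<psi>"
    obtain \<pi> where p: "grp_hom \<pi>" "bij \<pi>" "\<pi> \<circ> \<phi> = \<psi> \<circ> \<pi>" using c unfolding conjugate_def by blast
    obtain \<rho> where r: "grp_hom \<rho>" "bij \<rho>" "\<rho> \<circ> \<psi> = \<phi> \<circ> \<rho>" using conj_sym[OF c] unfolding conjugate_def by blast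
    note P1 = transfer_pos[OF p(1,3) lift_bij[OF p(1,2)]]
    note P2 = transfer_pos[OF r(1,3) lift_bij[OF r(1,2)]]
    note E1 = transfer_exp[OF p(1,3) lift_bij[OF p(1,2)]]
    note E2 = transfer_exp[OF r(1,3) lift_bij[OF r(1,2)]]
    have "pos_expansive \<phi> \<longleftrightarrow> pos_expansive \<psi>" using P1 P2 by (rule iffI)
    moreover have "automorphism \<phi> \<and> automorphism \<psi> \<longrightarrow> (expansive \<phi> \<longleftrightarrow> expansive \<psi>)"
    proof
      assume au: "automorphism \<phi> \<and> automorphism \<psi>"
      then have b: "bij \<phi>" "bij \<psi>" unfolding automorphism_def by simp_all
      show "expansive \<phi> \<longleftrightarrow> expansive \<psi>"
      proof
        assume "expansive \<phi>" then show "expansive \<psi>" using E1 b by simp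
      next
        assume "expansive \<psi>" then show "expansive \<phi>" using E2 b by simp
      qed
    qed
    ultimately show "(pos_expansive \<phi> \<longleftrightarrow> pos_expansive \<psi>)
            \<and> (automorphism \<phi> \<and> automorphism \<psi> \<longrightarrow> (expansive \<phi> \<longleftrightarrow> expansive \<psi>))" by (rule conjI)
  qed
  show ?thesis using A B C by (intro conjI)
qed

end
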